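(* There exists an absolute constant $C_2>0$ such that for every $\delta_0>0$ the following holds: if $\|\mathcal T-\mathcal S\|_{\mathrm{op}}<\delta_0$, then for all $x^+\in\mathbb R^{2n}$ and all nonzero $u\in\mathbb R^{2n}$, $$\big|u^TH_f(x^+)u-u^TH_g(x^+)u\big|<C_2\delta_0c\,\|u\|^2(\|x\|+\|x^\natural\|)^2,$$ where $H_f,H_g$ denote the Hessians of $f,g$ with respect to $x^+$.
   Context: Let $n,m\ge 1$, $a_1,\dots,a_m\in\mathbb C^n$ and $x^\natural\in\mathbb C^n$ with $x^\natural\neq 0$. For $a,b\in\mathbb C^n$ write $\langle a,b\rangle=\sum_{j}a_j\overline{b_j}$ and let $\|\cdot\|$ be the Euclidean norm. Let $y_i=|\langle a_i,x^\natural\rangle|^2$. For $v\in\mathbb C^n$ put $v^+=(\mathrm{Re}\,v,\mathrm{Im}\,v)\in\mathbb R^{2n}$ and $v^-=(-\mathrm{Im}\,v,\mathrm{Re}\,v)$; $x$ and $x^+$ always correspond. Define $f:\mathbb R^{2n}\to\mathbb R$ by $f(x^+)=\sum_{i=1}^m\big(|\langle a_i,x\rangle|^2-y_i\big)^2$. Fix $\sigma>0$ (in the paper, $\sigma^2=\mathrm{Var}((a_i^+)_1)$ for random measurement vectors), set $c=m\sigma^4$, and define $g(x^+)=8c\left(\|x\|^4+\|x^\natural\|^4-|\langle x,x^\natural\rangle|^2-\|x\|^2\|x^\natural\|^2\right)$. Define the order-4 tensors on $\mathbb R^{2n}$: $\mathcal T=\frac1c\sum_{i=1}^m(a_i^+)^{\otimes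 4}$ and $\mathcal S_{i_1i_2i_3i_4}=\mathbf 1_{i_1=i_2,\,i_3=i_4}+\mathbf 1_{i_1=i_3,\,i_2=i_4}+\mathbf 1_{i_1=i_4,\,i_2=i_3}$, and $\|\mathcal R\|_{\mathrm{op}}=\sup\{\langle \mathcal R,u_1\otimes u_2\otimes u_3\otimes u_4\rangle:\ u_j\in\mathbb R^{2n},\ \|u_1\|\|u_2\|\|u_3\|\|u_4\|=1\}$ (tensor inner product = sum of entrywise products). *)

theory Defs
  imports "HOL-Analysis.Analysis"
begin

text \<open>Dimensions are explicit natural numbers: a vector in C^n is a function
  nat \<Rightarrow> complex of which only the entries with index < n matter; a vector in
  R^(2n) is a function nat \<Rightarrow> real of which only the entries with index < 2n matter.
  The measurement vectors are a :: nat \<Rightarrow> nat \<Rightarrow> complex, a i being a_(i+1).\<close>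

definition cinner :: "nat \<Rightarrow> (nat \<Rightarrow> complex) \<Rightarrow> (nat \<Rightarrow> complex) \<Rightarrow> complex" where
  "cinner n v w = (\<Sum>j<n. v j * cnj (w j))"

definition cnorm :: "nat \<Rightarrow> (nat \<Rightarrow> complex) \<Rightarrow> real" where
  "cnorm n v = sqrt (\<Sum>j<n. (cmod (v j))\<^sup>2)"

definition rnorm :: "nat \<Rightarrow> (nat \<Rightarrow> real) \<Rightarrow> real" where
  "rnorm N u = sqrt (\<Sum>k<N. (u k)\<^sup>2)"

definition plusv :: "nat \<Rightarrow> (nat \<Rightarrow> complex) \<Rightarrow> nat \<Rightarrow> real" where
  "plusv n v = (\<lambda>k. if k < n then Re (v k) else if k < 2*n then Im (v (k - n)) else 0)"

definition ofplus :: "nat \<Rightarrow> (nat \<Rightarrow> real) \<Rightarrow> nat \<Rightarrow> complex" where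
  "ofplus n xp = (\<lambda>j. Complex (xp j) (xp (n + j)))"

definition f_obj :: "nat \<Rightarrow> nat \<Rightarrow> (nat \<Rightarrow> nat \<Rightarrow> complex) \<Rightarrow> (nat \<Rightarrow> complex)
    \<Rightarrow> (nat \<Rightarrow> real) \<Rightarrow> real" where
  "f_obj n m a xn xp =
     (\<Sum>i<m. ((cmod (cinner n (a i) (ofplus n xp)))\<^sup>2 - (cmod (cinner n (a i) xn))\<^sup>2)\<^sup>2)"

definition c_const :: "nat \<Rightarrow> real \<Rightarrow> real" where
  "c_const m \<sigma> = real m * \<sigma> ^ 4"

definition g_obj :: "nat \<Rightarrow> nat \<Rightarrow> real \<Rightarrow> (nat \<Rightarrow> complex) \<Rightarrow> (nat \<Rightarrow> real) \<Rightarrow> real" where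
  "g_obj n m \<sigma> xn xp =
     8 * c_const m \<sigma> * ((cnorm n (ofplus n xp)) ^ 4 + (cnorm n xn) ^ 4
        - (cmod (cinner n (ofplus n xp) xn))\<^sup>2 - (cnorm n (ofplus n xp))\<^sup>2 * (cnorm n xn)\<^sup>2)"

definition partial :: "((nat \<Rightarrow> real) \<Rightarrow> real) \<Rightarrow> (nat \<Rightarrow> real) \<Rightarrow> nat \<Rightarrow> real" where
  "partial F x k = deriv (\<lambda>t. F (x(k := x k + t))) 0"

definition hessian :: "((nat \<Rightarrow> real) \<Rightarrow> real) \<Rightarrow> (nat \<Rightarrow> real) \<Rightarrow> nat \<Rightarrow> nat \<Rightarrow> real" where
  "hessian F x k l = partial (\<lambda>y. partial F y l) x k"

definition hess_quad :: "nat \<Rightarrow> ((nat \<Rightarrow> real) \<Rightarrow> real) \<Rightarrow> (nat \<Rightarrow> real) \<Rightarrow> (nat \<Rightarrow> real) \<Rightarrow> real" where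
  "hess_quad N F x u = (\<Sum>k<N. \<Sum>l<N. u k * hessian F x k l * u l)"

type_synonym tensor4 = "nat \<Rightarrow> nat \<Rightarrow> nat \<Rightarrow> nat \<Rightarrow> real"

definition T_tensor :: "nat \<Rightarrow> nat \<Rightarrow> (nat \<Rightarrow> nat \<Rightarrow> complex) \<Rightarrow> real \<Rightarrow> tensor4" where
  "T_tensor n m a \<sigma> = (\<lambda>i1 i2 i3 i4. (1 / c_const m \<sigma>) *
     (\<Sum>i<m. plusv n (a i) i1 * plusv n (a i) i2 * plusv n (a i) i3 * plusv n (a i) i4))"

definition S_tensor :: tensor4 where
  "S_tensor = (\<lambda>i1 i2 i3 i4.
     (if i1 = i2 \<and> i3 = i4 then 1 else 0) + (if i1 = i3 \<and> i2 = i4 then 1 else 0)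
     + (if i1 = i4 \<and> i2 = i3 then 1 else 0))"

definition tensor_apply :: "nat \<Rightarrow> tensor4 \<Rightarrow> (nat \<Rightarrow> real) \<Rightarrow> (nat \<Rightarrow> real)
    \<Rightarrow> (nat \<Rightarrow> real) \<Rightarrow> (nat \<Rightarrow> real) \<Rightarrow> real" where
  "tensor_apply N R u1 u2 u3 u4 =
     (\<Sum>i1<N. \<Sum>i2<N. \<Sum>i3<N. \<Sum>i4<N. R i1 i2 i3 i4 * u1 i1 * u2 i2 * u3 i3 * u4 i4)"

definition tensor_opnorm :: "nat \<Rightarrow> tensor4 \<Rightarrow> real" where
  "tensor_opnorm N R = Sup {tensor_apply N R u1 u2 u3 u4 | u1 u2 u3 u4.
     rnorm N u1 * rnorm N u2 * rnorm N u3 * rnorm N u4 = 1}"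

end

theory Submission
  imports Defs
begin


definition lin :: "nat \<Rightarrow> (nat \<Rightarrow> real) \<Rightarrow> (nat \<Rightarrow> real) \<Rightarrow> real" where
  "lin N p y = (\<Sum>k<N. p k * y k)"

definition rot :: "nat \<Rightarrow> (nat \<Rightarrow> real) \<Rightarrow> nat \<Rightarrow> real" where
  "rot n v = (\<lambda>k. if k < n then - v (n + k) else if k < 2*n then v (k - n) else 0)"

lemma sum_split2:
  fixes g :: "nat \<Rightarrow> 'a::comm_monoid_add"
  shows "(\<Sum>k<2*n. g k) = (\<Sum>j<n. g j) + (\<Sum>j<n. g (n + j))"
proof -
  have "(\<Sum>k<2*n. g k) = sum g {0..<2*n}" by (simp add: atLeast0LessThan)
  also have "\<dots> = sum g {0..<n} + sum g {n..<2*n}"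
    by (rule sum.atLeastLessThan_concat[symmetric]) auto
  also have "sum g {n..<2*n} = sum g {0+n..<n+n}" by (simp add: mult_2)
  also have "\<dots> = (\<Sum>j=0..<n. g (j + n))" by (rule sum.shift_bounds_nat_ivl)
  finally show ?thesis by (simp add: atLeast0LessThan add.commute)
qed

lemma lin_comm: "lin N p y = lin N y p"
  by (simp add: lin_def mult.commute)

lemma lin_split: "lin (2*n) p y = (\<Sum>j<n. p j * y j + p (n+j) * y (n+j))"
  by (simp add: lin_def sum_split2 sum.distrib)

lemma rot_lo: "j < n \<Longrightarrow> rot n v j = - v (n+j)" by (simp add: rot_def)
lemma rot_hi: "j < n \<Longrightarrow> rot n v (n+j) = v j" by (simp add: rot_def)

lemma lin_rot_rot: "lin (2*n) (rot n a) (rot n b) = lin (2*n) a b"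
  unfolding lin_split by (rule sum.cong) (simp_all add: rot_lo rot_hi)

lemma lin_rot_swap: "lin (2*n) (rot n a) b = - lin (2*n) a (rot n b)"
  by (simp add: lin_split rot_lo rot_hi sum_negf[symmetric])

lemma lin_rot_self: "lin (2*n) a (rot n a) = 0"
  by (simp add: lin_split rot_lo rot_hi)

lemma lin_upd: "k < N \<Longrightarrow> lin N p (y(k := v)) = lin N p y + p k * (v - y k)"
proof -
  assume k: "k < N"
  have "lin N p (y(k := v)) = (\<Sum>j<N. p j * y j + (if j = k then p k * (v - y k) else 0))"
    unfolding lin_def by (rule sum.cong) (auto simp: algebra_simps)
  also have "\<dots> = lin N p y + p k * (v - y k)"
    using k by (simp add: sum.distrib lin_def)
  finally show ?thesis .
qed

lemma lin_upd_sq: "k < N \<Longrightarrow> lin N (y(k := v)) (y(k := v)) = lin N y y + v^2 - (y k)^2"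
proof -
  assume k: "k < N"
  have "lin N (y(k := v)) (y(k := v)) = (\<Sum>j<N. y j * y j + (if j = k then v^2 - (y k)^2 else 0))"
    unfolding lin_def by (rule sum.cong) (auto simp: algebra_simps power2_eq_square)
  also have "\<dots> = lin N y y + v^2 - (y k)^2"
    using k by (simp add: sum.distrib lin_def)
  finally show ?thesis .
qed

lemma rnorm_lin: "rnorm N u = sqrt (lin N u u)"
  by (simp add: rnorm_def lin_def power2_eq_square)

lemma rnorm_rot: "rnorm (2*n) (rot n u) = rnorm (2*n) u"
  by (simp add: rnorm_lin lin_rot_rot)

lemma cinner_re: "Re (cinner n b (ofplus n y)) = lin (2*n) (plusv n b) y"
  by (simp add: cinner_def lin_split plusv_def ofplus_def Re_sum)

lemma cinner_im: "Im (cinner n b (ofplus n y)) = - lin (2*n) (rot n (plusv n b)) y"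
  by (simp add: cinner_def lin_split plusv_def ofplus_def Im_sum rot_lo rot_hi sum_negf[symmetric])

lemma cmod_cinner_sq: "(cmod (cinner n b (ofplus n y)))^2
   = (lin (2*n) (plusv n b) y)^2 + (lin (2*n) (rot n (plusv n b)) y)^2"
  by (simp add: cmod_power2 cinner_re cinner_im)

lemma cinner_plusv: "cinner n b xn = cinner n b (ofplus n (plusv n xn))"
  unfolding cinner_def by (rule sum.cong) (auto simp: ofplus_def plusv_def complex_eq_iff)

lemma cinner_swap: "cmod (cinner n v w) = cmod (cinner n w v)"
proof -
  have "cinner n v w = cnj (cinner n w v)" by (simp add: cinner_def mult.commute)
  then show ?thesis by simp
qed

lemma cnorm_sq: "(cnorm n (ofplus n y))^2 = lin (2*n) y y"
  unfolding cnorm_def lin_split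
  by (subst real_sqrt_pow2) (auto intro!: sum_nonneg sum.cong simp: ofplus_def cmod_power2 simp flip: power2_eq_square)

lemma cnorm_plusv: "cnorm n xn = cnorm n (ofplus n (plusv n xn))"
  unfolding cnorm_def by (rule arg_cong[where f=sqrt], rule sum.cong) (auto simp: ofplus_def plusv_def)



lemma partial_eq: "((\<lambda>t. F (y(k := y k + t))) has_real_derivative D) (at 0) \<Longrightarrow> partial F y k = D"
  by (simp add: partial_def DERIV_imp_deriv)

lemma lin_upd2: "k < N \<Longrightarrow> lin N p (y(k := y k + t)) = lin N p y + p k * t"
  by (simp add: lin_upd)

lemma lin_comb: "lin N (\<lambda>k. a * p k + b * q k) u = a * lin N p u + b * lin N q u"
  by (simp add: lin_def sum.distrib sum_distrib_left algebra_simps)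

lemma QL: "(\<Sum>k<N. \<Sum>l<N. u k * (A * v k * v l + B * p k * p l + C * q k * q l
      + D * (if l = k then 1 else 0)) * u l)
   = A * (lin N v u)^2 + B * (lin N p u)^2 + C * (lin N q u)^2 + D * lin N u u"
proof -
  have inner: "(\<Sum>l<N. u k * (A * v k * v l + B * p k * p l + C * q k * q l
      + D * (if l = k then 1 else 0)) * u l)
   = (A * (u k * v k)) * lin N v u + (B * (u k * p k)) * lin N p u + (C * (u k * q k)) * lin N q u
      + D * (u k * u k)" if k: "k < N" for k
  proof -
    have "(\<Sum>l<N. u k * (A * v k * v l + B * p k * p l + C * q k * q l
      + D * (if l = k then 1 else 0)) * u l)
      = (\<Sum>l<N. (A * (u k * v k)) * (v l * u l) + (B * (u k * p k)) * (p l * u l)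
          + (C * (u k * q k)) * (q l * u l) + D * u k * (if l = k then u l else 0))"
      by (rule sum.cong) (auto simp: algebra_simps)
    also have "\<dots> = (A * (u k * v k)) * lin N v u + (B * (u k * p k)) * lin N p u + (C * (u k * q k)) * lin N q u
      + D * u k * (\<Sum>l<N. (if l = k then u l else 0))"
      by (simp only: sum.distrib lin_def sum_distrib_left)
    also have "(\<Sum>l<N. (if l = k then u l else 0)) = u k" using k by simp
    finally show ?thesis by simp
  qed
  have "(\<Sum>k<N. \<Sum>l<N. u k * (A * v k * v l + B * p k * p l + C * q k * q l
      + D * (if l = k then 1 else 0)) * u l)
   = (\<Sum>k<N. (A * (u k * v k)) * lin N v u + (B * (u k * p k)) * lin N p u + (C * (u k * q k)) * lin N q u
      + D * (u k * u k))"
    by (rule sum.cong) (simp_all add: inner)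
  also have "\<dots> = A * (lin N v u)^2 + B * (lin N p u)^2 + C * (lin N q u)^2 + D * lin N u u"
    by (simp only: sum.distrib sum_distrib_left[symmetric] sum_distrib_right[symmetric] lin_def power2_eq_square mult.commute) (simp add: ac_simps)
  finally show ?thesis .
qed

definition Fgen :: "nat \<Rightarrow> nat \<Rightarrow> (nat \<Rightarrow> nat \<Rightarrow> real) \<Rightarrow> (nat \<Rightarrow> nat \<Rightarrow> real) \<Rightarrow> (nat \<Rightarrow> real)
   \<Rightarrow> (nat \<Rightarrow> real) \<Rightarrow> real" where
  "Fgen N m P Q w y = (\<Sum>i<m. ((lin N (P i) y)^2 + (lin N (Q i) y)^2 - w i)^2)"

lemma d1: "D = 4*(L^2+M^2-w)*(L*p+M*q) \<Longrightarrow> ((\<lambda>t. ((L + p * t)^2 + (M + q * t)^2 - w)^2) has_real_derivative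
    D) (at 0)"
  by (auto intro!: derivative_eq_intros simp: algebra_simps power2_eq_square)

lemma d2: "D = 4*((2*L*p+2*M*q)*(L*a+M*b) + (L^2+M^2-w)*(p*a+q*b)) \<Longrightarrow>
  ((\<lambda>t. 4*(((L + p * t)^2 + (M + q * t)^2 - w)*((L + p * t)*a + (M + q * t)*b))) has_real_derivative
    D) (at 0)"
  by (auto intro!: derivative_eq_intros simp: algebra_simps power2_eq_square)

lemma Fgen_partial: "k < N \<Longrightarrow> partial (Fgen N m P Q w) y k =
  (\<Sum>i<m. 4*(((lin N (P i) y)^2 + (lin N (Q i) y)^2 - w i)*(lin N (P i) y * P i k + lin N (Q i) y * Q i k)))"
  apply (rule partial_eq)
  apply (simp only: Fgen_def lin_upd2)
  apply (rule DERIV_sum)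
  apply (rule d1)
  apply (simp add: algebra_simps)
  done

lemma Fgen_hess: "k < N \<Longrightarrow> l < N \<Longrightarrow> hessian (Fgen N m P Q w) y k l =
  (\<Sum>i<m. 4*((2*lin N (P i) y*P i k+2*lin N (Q i) y*Q i k)*(lin N (P i) y*P i l+lin N (Q i) y*Q i l)
     + ((lin N (P i) y)^2 + (lin N (Q i) y)^2 - w i)*(P i k*P i l+Q i k*Q i l)))"
  unfolding hessian_def
  apply (simp only: Fgen_partial)
  apply (rule partial_eq)
  apply (simp only: lin_upd2)
  apply (rule DERIV_sum)
  apply (rule d2)
  apply (simp add: algebra_simps)
  done

lemma Fgen_hq: "hess_quad N (Fgen N m P Q w) x u =
  (\<Sum>i<m. 8 * (lin N (P i) x * lin N (P i) u + lin N (Q i) x * lin N (Q i) u)^2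
     + 4 * ((lin N (P i) x)^2 + (lin N (Q i) x)^2 - w i) * ((lin N (P i) u)^2 + (lin N (Q i) u)^2))"
proof -
  define r where "r i = (\<lambda>k. lin N (P i) x * P i k + lin N (Q i) x * Q i k)" for i
  define s where "s i = (lin N (P i) x)^2 + (lin N (Q i) x)^2 - w i" for i
  have lr: "lin N (r i) u = lin N (P i) x * lin N (P i) u + lin N (Q i) x * lin N (Q i) u" for i
    unfolding r_def by (rule lin_comb)
  have "hess_quad N (Fgen N m P Q w) x u = (\<Sum>k<N. \<Sum>l<N. u k * (\<Sum>i<m.
     8 * r i k * r i l + 4 * s i * P i k * P i l + 4 * s i * Q i k * Q i l + 0 * (if l = k then 1 else 0)) * u l)"
    unfolding hess_quad_def
  proof (intro sum.cong refl)
    fix k l assume k: "k \<in> {..<N}" and l: "l \<in> {..<N}"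
    have "hessian (Fgen N m P Q w) x k l = (\<Sum>i<m.
     8 * r i k * r i l + 4 * s i * P i k * P i l + 4 * s i * Q i k * Q i l + 0 * (if l = k then 1 else 0))"
      using k l unfolding Fgen_hess[OF _ ] by (simp add: Fgen_hess, intro sum.cong refl) (simp add: r_def s_def algebra_simps)
    then show "u k * hessian (Fgen N m P Q w) x k l * u l = u k * (\<Sum>i<m.
     8 * r i k * r i l + 4 * s i * P i k * P i l + 4 * s i * Q i k * Q i l + 0 * (if l = k then 1 else 0)) * u l"
      by simp
  qed
  also have "\<dots> = (\<Sum>i<m. \<Sum>k<N. \<Sum>l<N. u k * (
     8 * r i k * r i l + 4 * s i * P i k * P i l + 4 * s i * Q i k * Q i l + 0 * (if l = k then 1 else 0)) * u l)"
    by (simp only: sum_distrib_left sum_distrib_right sum.swap[of _ "{..<m}"])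
  also have "\<dots> = (\<Sum>i<m. 8 * (lin N (r i) u)^2 + 4 * s i * (lin N (P i) u)^2 + 4 * s i * (lin N (Q i) u)^2)"
    by (subst QL) simp
  finally show ?thesis by (simp add: lr s_def algebra_simps)
qed



definition Ggen :: "nat \<Rightarrow> real \<Rightarrow> (nat \<Rightarrow> real) \<Rightarrow> (nat \<Rightarrow> real) \<Rightarrow> real \<Rightarrow> (nat \<Rightarrow> real) \<Rightarrow> real" where
  "Ggen N K Z W zz y = K * ((lin N y y)^2 + zz^2 - (lin N Z y)^2 - (lin N W y)^2 - lin N y y * zz)"

lemma upd_apply: "((y::nat\<Rightarrow>real)(k := y k + t)) l = y l + (if l = k then 1 else 0) * t"
  by auto

lemma e1: "D = K*(4*Q*a - 2*A*z - 2*B*w - 2*zz*a) \<Longrightarrow>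
  ((\<lambda>t. K * ((Q + (a + t)^2 - a^2)^2 + zz^2 - (A + z * t)^2 - (B + w * t)^2 - (Q + (a + t)^2 - a^2) * zz))
   has_real_derivative D) (at 0)"
  by (auto intro!: derivative_eq_intros simp: algebra_simps power2_eq_square)

lemma e2: "D = K*(4*(2*a*b + Q*d) - 2*z*z' - 2*w*w' - 2*zz*d) \<Longrightarrow>
  ((\<lambda>t. K*(4*(Q + (a + t)^2 - a^2)*(b + d * t) - 2*(A + z * t)*z' - 2*(B + w * t)*w' - 2*zz*(b + d*t)))
   has_real_derivative D) (at 0)"
  by (auto intro!: derivative_eq_intros simp: algebra_simps power2_eq_square)

lemma Ggen_partial: "k < N \<Longrightarrow> partial (Ggen N K Z W zz) y k =
   K*(4*lin N y y*y k - 2*lin N Z y*Z k - 2*lin N W y*W k - 2*zz*y k)"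
  apply (rule partial_eq)
  apply (simp only: Ggen_def lin_upd_sq fun_upd_same)
  apply (simp only: lin_upd2)
  apply (rule e1)
  apply simp
  done

lemma Ggen_hess: "k < N \<Longrightarrow> l < N \<Longrightarrow> hessian (Ggen N K Z W zz) y k l =
   K*(4*(2*y k*y l + lin N y y*(if l = k then 1 else 0)) - 2*Z k*Z l - 2*W k*W l - 2*zz*(if l = k then 1 else 0))"
  unfolding hessian_def
  apply (simp only: Ggen_partial)
  apply (rule partial_eq)
  apply (simp only: lin_upd_sq fun_upd_same)
  apply (simp only: lin_upd2 upd_apply[of y k _ l])
  apply (rule e2)
  apply (simp add: algebra_simps)
  done

lemma Ggen_hq: "hess_quad N (Ggen N K Z W zz) x u =
   8*K*(lin N x u)^2 - 2*K*(lin N Z u)^2 - 2*K*(lin N W u)^2 + K*(4*lin N x x - 2*zz)*lin N u u"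
proof -
  have "hess_quad N (Ggen N K Z W zz) x u = (\<Sum>k<N. \<Sum>l<N. u k * ((8*K) * x k * x l + (-2*K) * Z k * Z l
      + (-2*K) * W k * W l + (K*(4*lin N x x - 2*zz)) * (if l = k then 1 else 0)) * u l)"
    unfolding hess_quad_def
  proof (intro sum.cong refl)
    fix k l assume k: "k \<in> {..<N}" and l: "l \<in> {..<N}"
    then show "u k * hessian (Ggen N K Z W zz) x k l * u l = u k * ((8*K) * x k * x l + (-2*K) * Z k * Z l
      + (-2*K) * W k * W l + (K*(4*lin N x x - 2*zz)) * (if l = k then 1 else 0)) * u l"
      by (simp add: Ggen_hess algebra_simps)
  qed
  also have "\<dots> = 8*K*(lin N x u)^2 - 2*K*(lin N Z u)^2 - 2*K*(lin N W u)^2 + K*(4*lin N x x - 2*zz)*lin N u u"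
    by (subst QL) simp
  finally show ?thesis .
qed

lemma g_closed: "g_obj n m \<sigma> xn y = Ggen (2*n) (8 * c_const m \<sigma>) (plusv n xn) (rot n (plusv n xn))
    (lin (2*n) (plusv n xn) (plusv n xn)) y"
proof -
  have a: "(cnorm n (ofplus n y))^4 = (lin (2*n) y y)^2"
    by (metis cnorm_sq power_mult numeral_times_numeral semiring_norm(12) num_double)
  have b: "(cnorm n xn)^2 = lin (2*n) (plusv n xn) (plusv n xn)"
    by (metis cnorm_sq cnorm_plusv)
  have b4: "(cnorm n xn)^4 = (lin (2*n) (plusv n xn) (plusv n xn))^2"
    by (metis b power_mult numeral_times_numeral semiring_norm(12) num_double)
  have c: "(cmod (cinner n (ofplus n y) xn))^2 = (lin (2*n) (plusv n xn) y)^2 + (lin (2*n) (rot n (plusv n xn)) y)^2"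
    by (simp add: cinner_swap[of n "ofplus n y"] cmod_cinner_sq)
  show ?thesis unfolding g_obj_def Ggen_def a b b4 c cnorm_sq by (simp add: algebra_simps)
qed

lemma f_closed: "f_obj n m a xn y = Fgen (2*n) m (\<lambda>i. plusv n (a i)) (\<lambda>i. rot n (plusv n (a i)))
   (\<lambda>i. (cmod (cinner n (a i) xn))^2) y"
  unfolding f_obj_def Fgen_def cmod_cinner_sq ..



lemma ta_diff: "tensor_apply N (\<lambda>i1 i2 i3 i4. R1 i1 i2 i3 i4 - R2 i1 i2 i3 i4) v1 v2 v3 v4
   = tensor_apply N R1 v1 v2 v3 v4 - tensor_apply N R2 v1 v2 v3 v4"
  by (simp add: tensor_apply_def algebra_simps sum_subtractf)

lemma ta_add: "tensor_apply N (\<lambda>i1 i2 i3 i4. R1 i1 i2 i3 i4 + R2 i1 i2 i3 i4) v1 v2 v3 v4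
   = tensor_apply N R1 v1 v2 v3 v4 + tensor_apply N R2 v1 v2 v3 v4"
  by (simp add: tensor_apply_def algebra_simps sum.distrib)

lemma ta_prod4: "tensor_apply N (\<lambda>i1 i2 i3 i4. f1 i1 * f2 i2 * f3 i3 * f4 i4) v1 v2 v3 v4
   = lin N f1 v1 * lin N f2 v2 * lin N f3 v3 * lin N f4 v4"
proof -
  have "tensor_apply N (\<lambda>i1 i2 i3 i4. f1 i1 * f2 i2 * f3 i3 * f4 i4) v1 v2 v3 v4
    = (\<Sum>i1<N. \<Sum>i2<N. \<Sum>i3<N. \<Sum>i4<N. ((f1 i1 * v1 i1) * (f2 i2 * v2 i2)) * (f3 i3 * v3 i3) * (f4 i4 * v4 i4))"
    by (simp add: tensor_apply_def mult_ac)
  also have "\<dots> = lin N f1 v1 * lin N f2 v2 * lin N f3 v3 * lin N f4 v4"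
    by (simp only: sum_distrib_left[symmetric] sum_distrib_right[symmetric] lin_def)
  finally show ?thesis .
qed

lemma ta_rank1: "tensor_apply N (\<lambda>i1 i2 i3 i4. p i1 * p i2 * p i3 * p i4) v1 v2 v3 v4
   = lin N p v1 * lin N p v2 * lin N p v3 * lin N p v4"
  by (rule ta_prod4)

lemma ta_cong: "(\<And>i1 i2 i3 i4. i1 < N \<Longrightarrow> i2 < N \<Longrightarrow> i3 < N \<Longrightarrow> i4 < N \<Longrightarrow> R i1 i2 i3 i4 = R' i1 i2 i3 i4)
  \<Longrightarrow> tensor_apply N R v1 v2 v3 v4 = tensor_apply N R' v1 v2 v3 v4"
  unfolding tensor_apply_def by (intro sum.cong refl) auto

lemma ta_sum: "tensor_apply N (\<lambda>i1 i2 i3 i4. (\<Sum>i\<in>I. R i i1 i2 i3 i4)) v1 v2 v3 v4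
   = (\<Sum>i\<in>I. tensor_apply N (R i) v1 v2 v3 v4)"
  unfolding tensor_apply_def
  by (simp add: sum_distrib_right) (simp only: sum.swap[of _ I])

lemma ta_scale: "tensor_apply N (\<lambda>i1 i2 i3 i4. K * R i1 i2 i3 i4) v1 v2 v3 v4
   = K * tensor_apply N R v1 v2 v3 v4"
  by (simp add: tensor_apply_def sum_distrib_left mult_ac)

lemma T_app: "tensor_apply (2*n) (T_tensor n m a \<sigma>) v1 v2 v3 v4
  = (1 / c_const m \<sigma>) * (\<Sum>i<m. lin (2*n) (plusv n (a i)) v1 * lin (2*n) (plusv n (a i)) v2
        * lin (2*n) (plusv n (a i)) v3 * lin (2*n) (plusv n (a i)) v4)"
  unfolding T_tensor_def ta_scale ta_sum ta_rank1 ..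

definition E :: "nat \<Rightarrow> nat \<Rightarrow> real" where "E j i = (if i = j then 1 else 0)"

lemma lin_E: "j < N \<Longrightarrow> lin N (E j) v = v j"
proof -
  assume j: "j < N"
  have "lin N (E j) v = (\<Sum>k<N. if j = k then v k else 0)"
    unfolding lin_def by (rule sum.cong) (auto simp: E_def)
  then show ?thesis using j by simp
qed

lemma E_ind: "i1 < N \<Longrightarrow> (\<Sum>j<N. E j i1 * E j i2) = (if i1 = i2 then 1 else 0)"
proof -
  assume j: "i1 < N"
  have "(\<Sum>j<N. E j i1 * E j i2) = (\<Sum>j<N. if i1 = j then (if i1 = i2 then 1 else 0) else 0)"
    by (rule sum.cong) (auto simp: E_def)
  then show ?thesis using j by simp
qed

lemma if_mult01: "(if P then 1 else 0) * (if Q then 1 else 0) = (if P \<and> Q then (1::real) else 0)"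
  by simp

lemma S_ind: "(if i1 = i2 then 1 else 0) * (if i3 = i4 then 1 else 0) + (if i1 = i3 then 1 else 0) * (if i2 = i4 then 1 else 0)
   + (if i1 = i4 then 1 else 0) * (if i2 = i3 then 1 else 0) = S_tensor i1 i2 i3 i4"
  unfolding S_tensor_def if_mult01 ..

lemma S_app: "tensor_apply N S_tensor a b c d = lin N a b * lin N c d + lin N a c * lin N b d + lin N a d * lin N b c"
proof -
  have "tensor_apply N S_tensor a b c d = tensor_apply N (\<lambda>i1 i2 i3 i4. \<Sum>j<N. \<Sum>k<N.
      E j i1 * E j i2 * E k i3 * E k i4 + E j i1 * E k i2 * E j i3 * E k i4 + E j i1 * E k i2 * E k i3 * E j i4) a b c d"
  proof (rule ta_cong)
    fix i1 i2 i3 i4 assume h: "i1 < N" "i2 < N" "i3 < N" "i4 < N"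
    have "(\<Sum>j<N. \<Sum>k<N. E j i1 * E j i2 * E k i3 * E k i4 + E j i1 * E k i2 * E j i3 * E k i4 + E j i1 * E k i2 * E k i3 * E j i4)
      = (\<Sum>j<N. E j i1 * E j i2) * (\<Sum>k<N. E k i3 * E k i4) + (\<Sum>j<N. E j i1 * E j i3) * (\<Sum>k<N. E k i2 * E k i4)
        + (\<Sum>j<N. E j i1 * E j i4) * (\<Sum>k<N. E k i2 * E k i3)"
    proof -
      have "(\<Sum>j<N. \<Sum>k<N. E j i1 * E j i2 * E k i3 * E k i4 + E j i1 * E k i2 * E j i3 * E k i4 + E j i1 * E k i2 * E k i3 * E j i4)
        = (\<Sum>j<N. \<Sum>k<N. (E j i1 * E j i2) * (E k i3 * E k i4) + (E j i1 * E j i3) * (E k i2 * E k i4) + (E j i1 * E j i4) * (E k i2 * E k i3))"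
        by (intro sum.cong refl) (simp add: mult_ac)
      also have "\<dots> = (\<Sum>j<N. E j i1 * E j i2) * (\<Sum>k<N. E k i3 * E k i4) + (\<Sum>j<N. E j i1 * E j i3) * (\<Sum>k<N. E k i2 * E k i4)
        + (\<Sum>j<N. E j i1 * E j i4) * (\<Sum>k<N. E k i2 * E k i3)"
        by (simp only: sum.distrib sum_product)
      finally show ?thesis .
    qed
    also have "\<dots> = S_tensor i1 i2 i3 i4"
      unfolding E_ind[OF h(1)] E_ind[OF h(2)] E_ind[OF h(3)] by (rule S_ind)
    finally show "S_tensor i1 i2 i3 i4 = (\<Sum>j<N. \<Sum>k<N. E j i1 * E j i2 * E k i3 * E k i4 + E j i1 * E k i2 * E j i3 * E k i4 + E j i1 * E k i2 * E k i3 * E j i4)" by (rule sym)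
  qed
  also have "\<dots> = (\<Sum>j<N. \<Sum>k<N. a j * b j * c k * d k + a j * b k * c j * d k + a j * b k * c k * d j)"
    by (simp add: ta_sum ta_add ta_prod4 lin_E)
  also have "\<dots> = lin N a b * lin N c d + lin N a c * lin N b d + lin N a d * lin N b c"
    by (simp add: sum.distrib lin_def sum_product mult_ac)
  finally show ?thesis .
qed



lemma comp_le_rnorm: "k < N \<Longrightarrow> \<bar>u k\<bar> \<le> rnorm N u"
proof -
  assume k: "k < N"
  have "(u k)^2 \<le> (\<Sum>j<N. (u j)^2)"
    using k by (intro member_le_sum) auto
  then have "sqrt ((u k)^2) \<le> rnorm N u" unfolding rnorm_def by (rule real_sqrt_le_mono)
  then show ?thesis by simp
qed

lemma rnorm_nonneg: "rnorm N u \<ge> 0"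
  by (simp add: rnorm_def sum_nonneg)

lemma rnorm_scale: "rnorm N (\<lambda>k. a * v k) = \<bar>a\<bar> * rnorm N v"
  by (simp add: rnorm_def power_mult_distrib sum_distrib_left[symmetric] real_sqrt_mult)

lemma rnorm_zero: "rnorm N v = 0 \<Longrightarrow> k < N \<Longrightarrow> v k = 0"
proof -
  assume r: "rnorm N v = 0" and k: "k < N"
  have "(\<Sum>j<N. (v j)^2) = 0" using r by (simp add: rnorm_def sum_nonneg)
  then have "\<forall>j\<in>{..<N}. (v j)^2 = 0" by (subst (asm) sum_nonneg_eq_0_iff) auto
  then show ?thesis using k by simp
qed

lemma abs_sum_le: fixes f g :: "'a \<Rightarrow> real" shows "(\<And>i. i \<in> A \<Longrightarrow> \<bar>f i\<bar> \<le> g i) \<Longrightarrow> \<bar>sum f A\<bar> \<le> sum g A"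
proof -
  assume h: "\<And>i. i \<in> A \<Longrightarrow> \<bar>f i\<bar> \<le> g i"
  have "\<bar>sum f A\<bar> \<le> sum (\<lambda>i. \<bar>f i\<bar>) A" by (rule sum_abs)
  also have "\<dots> \<le> sum g A" by (rule sum_mono) (rule h)
  finally show ?thesis .
qed

lemma ta_crude: "\<bar>tensor_apply N R u1 u2 u3 u4\<bar> \<le>
  (\<Sum>i1<N. \<Sum>i2<N. \<Sum>i3<N. \<Sum>i4<N. \<bar>R i1 i2 i3 i4\<bar>) * (rnorm N u1 * rnorm N u2 * rnorm N u3 * rnorm N u4)"
proof -
  have "\<bar>tensor_apply N R u1 u2 u3 u4\<bar> \<le>
    (\<Sum>i1<N. \<Sum>i2<N. \<Sum>i3<N. \<Sum>i4<N. \<bar>R i1 i2 i3 i4\<bar> * (rnorm N u1 * rnorm N u2 * rnorm N u3 * rnorm N u4))"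
    unfolding tensor_apply_def
  proof (intro abs_sum_le)
    fix i1 i2 i3 i4 assume h: "i1 \<in> {..<N}" "i2 \<in> {..<N}" "i3 \<in> {..<N}" "i4 \<in> {..<N}"
    have "\<bar>u1 i1\<bar> * \<bar>u2 i2\<bar> * \<bar>u3 i3\<bar> * \<bar>u4 i4\<bar> \<le> rnorm N u1 * rnorm N u2 * rnorm N u3 * rnorm N u4"
      using h by (intro mult_mono comp_le_rnorm) (auto simp: rnorm_nonneg)
    then show "\<bar>R i1 i2 i3 i4 * u1 i1 * u2 i2 * u3 i3 * u4 i4\<bar>
         \<le> \<bar>R i1 i2 i3 i4\<bar> * (rnorm N u1 * rnorm N u2 * rnorm N u3 * rnorm N u4)"
      by (simp add: abs_mult mult.assoc mult_left_mono)
  qed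
  then show ?thesis by (simp add: sum_distrib_right)
qed

lemma ta_s1: "tensor_apply N R (\<lambda>k. a * v k) v2 v3 v4 = a * tensor_apply N R v v2 v3 v4"
  by (simp add: tensor_apply_def sum_distrib_left mult_ac)
lemma ta_s2: "tensor_apply N R v1 (\<lambda>k. a * v k) v3 v4 = a * tensor_apply N R v1 v v3 v4"
  by (simp add: tensor_apply_def sum_distrib_left mult_ac)
lemma ta_s3: "tensor_apply N R v1 v2 (\<lambda>k. a * v k) v4 = a * tensor_apply N R v1 v2 v v4"
  by (simp add: tensor_apply_def sum_distrib_left mult_ac)
lemma ta_s4: "tensor_apply N R v1 v2 v3 (\<lambda>k. a * v k) = a * tensor_apply N R v1 v2 v3 v"
  by (simp add: tensor_apply_def sum_distrib_left mult_ac)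

lemma ta_zero: "(\<And>k. k < N \<Longrightarrow> v1 k * v2 k * v3 k * v4 k = 0 \<or> True) \<Longrightarrow>
   ((\<forall>k<N. v1 k = 0) \<or> (\<forall>k<N. v2 k = 0) \<or> (\<forall>k<N. v3 k = 0) \<or> (\<forall>k<N. v4 k = 0)) \<Longrightarrow>
   tensor_apply N R v1 v2 v3 v4 = 0"
  unfolding tensor_apply_def by (elim disjE) (auto intro!: sum.neutral)

lemma ta_bound: "\<bar>tensor_apply N R v1 v2 v3 v4\<bar> \<le> tensor_opnorm N R * (rnorm N v1 * rnorm N v2 * rnorm N v3 * rnorm N v4)"
proof -
  define B where "B = (\<Sum>i1<N. \<Sum>i2<N. \<Sum>i3<N. \<Sum>i4<N. \<bar>R i1 i2 i3 i4\<bar>)"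
  define S where "S = {tensor_apply N R u1 u2 u3 u4 | u1 u2 u3 u4.
     rnorm N u1 * rnorm N u2 * rnorm N u3 * rnorm N u4 = 1}"
  have bdd: "bdd_above S"
  proof (rule bdd_aboveI)
    fix s assume "s \<in> S"
    then obtain u1 u2 u3 u4 where s: "s = tensor_apply N R u1 u2 u3 u4"
      and p: "rnorm N u1 * rnorm N u2 * rnorm N u3 * rnorm N u4 = 1" unfolding S_def by blast
    have "s \<le> \<bar>s\<bar>" by simp
    also have "\<dots> \<le> B" using ta_crude[of N R u1 u2 u3 u4] unfolding s p B_def by simp
    finally show "s \<le> B" .
  qed
  have opdef: "tensor_opnorm N R = Sup S" unfolding tensor_opnorm_def S_def ..
  show ?thesis
  proof (cases "rnorm N v1 = 0 \<or> rnorm N v2 = 0 \<or> rnorm N v3 = 0 \<or> rnorm N v4 = 0")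
    case True
    then have "tensor_apply N R v1 v2 v3 v4 = 0"
      by (intro ta_zero) (auto dest: rnorm_zero)
    then show ?thesis using True by auto
  next
    case False
    define r1 where "r1 = rnorm N v1"
    define r2 where "r2 = rnorm N v2"
    define r3 where "r3 = rnorm N v3"
    define r4 where "r4 = rnorm N v4"
    have pos: "r1 > 0" "r2 > 0" "r3 > 0" "r4 > 0"
      using False rnorm_nonneg[of N] unfolding r1_def r2_def r3_def r4_def by (auto simp: less_le)
    have mem: "e * tensor_apply N R v1 v2 v3 v4 / (r1*r2*r3*r4) \<in> S" if e: "\<bar>e\<bar> = 1" for e
    proof -
      have "e * tensor_apply N R v1 v2 v3 v4 / (r1*r2*r3*r4)
        = tensor_apply N R (\<lambda>k. (e / r1) * v1 k) (\<lambda>k. (1 / r2) * v2 k) (\<lambda>k. (1 / r3) * v3 k) (\<lambda>k. (1 / r4) * v4 k)"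
        by (simp only: ta_s1 ta_s2 ta_s3 ta_s4) simp
      moreover have "rnorm N (\<lambda>k. (e / r1) * v1 k) * rnorm N (\<lambda>k. (1 / r2) * v2 k) * rnorm N (\<lambda>k. (1 / r3) * v3 k)
          * rnorm N (\<lambda>k. (1 / r4) * v4 k) = 1"
        using pos e unfolding rnorm_scale by (simp add: r1_def[symmetric] r2_def[symmetric] r3_def[symmetric] r4_def[symmetric] abs_div)
      ultimately show ?thesis unfolding S_def by blast
    qed
    have le1: "1 * tensor_apply N R v1 v2 v3 v4 / (r1*r2*r3*r4) \<le> Sup S"
      by (rule cSup_upper[OF mem bdd]) simp
    have le2: "(-1) * tensor_apply N R v1 v2 v3 v4 / (r1*r2*r3*r4) \<le> Sup S"
      by (rule cSup_upper[OF mem bdd]) simp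
    have pp: "r1*r2*r3*r4 > 0" using pos by simp
    have "\<bar>tensor_apply N R v1 v2 v3 v4\<bar> / (r1*r2*r3*r4) \<le> Sup S"
      using le1 le2 by (simp add: abs_if)
    then show ?thesis using pp unfolding opdef r1_def r2_def r3_def r4_def
      by (simp add: divide_le_eq mult_ac)
  qed
qed



definition Phi :: "((nat \<Rightarrow> real) \<Rightarrow> (nat \<Rightarrow> real) \<Rightarrow> (nat \<Rightarrow> real) \<Rightarrow> (nat \<Rightarrow> real) \<Rightarrow> real)
  \<Rightarrow> (nat \<Rightarrow> real) \<Rightarrow> (nat \<Rightarrow> real) \<Rightarrow> (nat \<Rightarrow> real) \<Rightarrow> (nat \<Rightarrow> real) \<Rightarrow> (nat \<Rightarrow> real) \<Rightarrow> (nat \<Rightarrow> real) \<Rightarrow> real" where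
  "Phi F x x' u u' z z' = 8*(F x x u u + 2*F x x' u u' + F x' x' u' u') + 4*(F x x u u + F x' x' u u - F z z u u
     - F z' z' u u + F x x u' u' + F x' x' u' u' - F z z u' u' - F z' z' u' u')"

lemma Phi_sum: "Phi (\<lambda>v1 v2 v3 v4. \<Sum>i\<in>I. g i v1 v2 v3 v4) x x' u u' z z' = (\<Sum>i\<in>I. Phi (g i) x x' u u' z z')"
proof (cases "finite I")
  case True
  then show ?thesis by (induct I rule: finite_induct) (simp_all add: Phi_def algebra_simps)
next
  case False
  then show ?thesis by (simp add: Phi_def)
qed

lemma Phi_scale: "Phi (\<lambda>v1 v2 v3 v4. K * F v1 v2 v3 v4) x x' u u' z z' = K * Phi F x x' u u' z z'"
  by (simp add: Phi_def algebra_simps)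

lemma Phi_diff: "Phi (\<lambda>v1 v2 v3 v4. F1 v1 v2 v3 v4 - F2 v1 v2 v3 v4) x x' u u' z z'
   = Phi F1 x x' u u' z z' - Phi F2 x x' u u' z z'"
  by (simp add: Phi_def algebra_simps)

lemma Phi_bound:
  assumes b: "\<And>v1 v2 v3 v4. \<bar>F v1 v2 v3 v4\<bar> \<le> K * (r v1 * r v2 * r v3 * r v4)"
    and K: "K \<ge> 0" and rx: "r x \<le> M" "r x' \<le> M" "r z \<le> M" "r z' \<le> M"
    and ru: "r u = U" "r u' = U"
    and nn: "\<And>v. r v \<ge> 0"
  shows "\<bar>Phi F x x' u u' z z'\<bar> \<le> 64 * K * U^2 * M^2"
proof -
  have one: "\<bar>F a b u1 u2\<bar> \<le> K * U^2 * M^2" if "a \<in> {x,x',z,z'}" "b \<in> {x,x',z,z'}" "u1 \<in> {u,u'}" "u2 \<in> {u,u'}" for a b u1 u2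
  proof -
    have M0: "0 \<le> M" using nn[of x] rx(1) by linarith
    have ra: "r a \<le> M" "r b \<le> M" using that rx by auto
    have rr: "r u1 = U" "r u2 = U" using that ru by auto
    have "r a * r b \<le> M * M" using ra nn M0 by (intro mult_mono) auto
    then have "K * (r a * r b * r u1 * r u2) \<le> K * (M * M * U * U)"
      unfolding rr using K nn[of u] ru by (intro mult_left_mono mult_right_mono) auto
    then show ?thesis using b[of a b u1 u2] by (simp add: power2_eq_square mult_ac)
  qed
  show ?thesis unfolding Phi_def
    using one[of x x u u] one[of x x' u u'] one[of x' x' u' u'] one[of x' x' u u] one[of z z u u]
      one[of z' z' u u] one[of x x u' u'] one[of z z u' u'] one[of z' z' u' u']
    by (simp add: abs_le_iff)
qed



lemma rnorm_cnorm: "rnorm (2*n) y = cnorm n (ofplus n y)"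
proof -
  have "cnorm n (ofplus n y) \<ge> 0" by (simp add: cnorm_def sum_nonneg)
  then show ?thesis by (simp add: rnorm_lin cnorm_sq[symmetric])
qed

lemma rnorm_cnorm_xn: "rnorm (2*n) (plusv n xn) = cnorm n xn"
  by (simp add: rnorm_cnorm cnorm_plusv[symmetric])

lemma main_bound:
  fixes \<delta>0 \<sigma> :: real and n m :: nat and a :: "nat \<Rightarrow> nat \<Rightarrow> complex" and xn :: "nat \<Rightarrow> complex"
    and xp u :: "nat \<Rightarrow> real"
  assumes d0: "\<delta>0 > 0" and n1: "n \<ge> 1" and m1: "m \<ge> 1" and xnz: "\<exists>j<n. xn j \<noteq> 0" and sg: "\<sigma> > 0"
    and op: "tensor_opnorm (2*n) (\<lambda>i1 i2 i3 i4. T_tensor n m a \<sigma> i1 i2 i3 i4 - S_tensor i1 i2 i3 i4) < \<delta>0"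
    and unz: "\<exists>k<2*n. u k \<noteq> 0"
  shows "\<bar>hess_quad (2*n) (f_obj n m a xn) xp u - hess_quad (2*n) (g_obj n m \<sigma> xn) xp u\<bar>
              < 64 * \<delta>0 * c_const m \<sigma> * (rnorm (2*n) u)\<^sup>2
                * (cnorm n (ofplus n xp) + cnorm n xn)\<^sup>2"
proof -
  define N where "N = 2*n"
  define c where "c = c_const m \<sigma>"
  define P where "P = (\<lambda>i. plusv n (a i))"
  define z where "z = plusv n xn"
  define x' where "x' = rot n xp"
  define u' where "u' = rot n u"
  define z' where "z' = rot n z"
  define R where "R = (\<lambda>i1 i2 i3 i4. T_tensor n m a \<sigma> i1 i2 i3 i4 - S_tensor i1 i2 i3 i4)"
  define g where "g i = (\<lambda>v1 v2 v3 v4. lin N (P i) v1 * lin N (P i) v2 * lin N (P i) v3 * lin N (P i) v4)" for i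
  have c0: "c > 0" using m1 sg by (simp add: c_def c_const_def)
  have fF: "f_obj n m a xn = Fgen N m P (\<lambda>i. rot n (P i)) (\<lambda>i. (cmod (cinner n (a i) xn))^2)"
    by (rule ext) (simp add: f_closed N_def P_def)
  have w: "(cmod (cinner n (a i) xn))^2 = (lin N (P i) z)^2 + (lin N (P i) z')^2" for i
    by (simp add: cinner_plusv[of n "a i" xn] cmod_cinner_sq N_def P_def z_def z'_def lin_rot_swap)
  have hf0: "hess_quad N (f_obj n m a xn) xp u = (\<Sum>i<m. Phi (g i) xp x' u u' z z')"
    unfolding fF Fgen_hq
  proof (rule sum.cong[OF refl])
    fix i
    show "8 * (lin N (P i) xp * lin N (P i) u + lin N (rot n (P i)) xp * lin N (rot n (P i)) u)\<^sup>2 +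
          4 * ((lin N (P i) xp)\<^sup>2 + (lin N (rot n (P i)) xp)\<^sup>2 - (cmod (cinner n (a i) xn))\<^sup>2) *
          ((lin N (P i) u)\<^sup>2 + (lin N (rot n (P i)) u)\<^sup>2) = Phi (g i) xp x' u u' z z'"
      unfolding w Phi_def g_def N_def x'_def u'_def lin_rot_swap
      by (simp add: power2_eq_square algebra_simps)
  qed
  have gsum: "(\<lambda>v1 v2 v3 v4. \<Sum>i<m. g i v1 v2 v3 v4) = (\<lambda>v1 v2 v3 v4. c * tensor_apply N (T_tensor n m a \<sigma>) v1 v2 v3 v4)"
    using c0 by (intro ext) (simp add: T_app N_def g_def P_def c_def)
  have hf: "hess_quad N (f_obj n m a xn) xp u = c * Phi (tensor_apply N (T_tensor n m a \<sigma>)) xp x' u u' z z'"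
    unfolding hf0 Phi_sum[symmetric] gsum Phi_scale ..
  have gG: "g_obj n m \<sigma> xn = Ggen N (8 * c) z z' (lin N z z)"
    by (rule ext) (simp add: g_closed N_def c_def z_def z'_def)
  have hg: "hess_quad N (g_obj n m \<sigma> xn) xp u = c * Phi (tensor_apply N S_tensor) xp x' u u' z z'"
  proof -
    have i1a: "lin N xp x' = 0" "lin N u u' = 0"
      by (simp_all only: N_def x'_def u'_def lin_rot_self)
    have i1b: "lin N x' x' = lin N xp xp" "lin N u' u' = lin N u u"
       "lin N z' z' = lin N z z" "lin N x' u' = lin N xp u" "lin N z' u' = lin N z u"
      by (simp_all only: N_def x'_def u'_def z'_def lin_rot_rot)
    have i1c: "lin N x' u = - lin N xp u'" "lin N z' u = - lin N z u'"
      by (simp_all only: N_def x'_def u'_def z'_def lin_rot_swap)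
    note i1 = i1a i1b i1c
    have i2: "lin N u xp = lin N xp u" "lin N u' xp = lin N xp u'" "lin N x' xp = lin N xp x'"
      "lin N u' x' = lin N x' u'" "lin N u x' = lin N x' u" "lin N u z = lin N z u" "lin N u' z = lin N z u'"
      "lin N u z' = lin N z' u" "lin N u' z' = lin N z' u'" "lin N u' u = lin N u u'"
      by (simp_all add: lin_comm)
    show ?thesis
      unfolding gG Ggen_hq Phi_def S_app i2 i1
      by (simp add: power2_eq_square algebra_simps)
  qed
  have diff: "hess_quad N (f_obj n m a xn) xp u - hess_quad N (g_obj n m \<sigma> xn) xp u
     = c * Phi (tensor_apply N R) xp x' u u' z z'"
  proof -
    have "tensor_apply N R = (\<lambda>v1 v2 v3 v4. tensor_apply N (T_tensor n m a \<sigma>) v1 v2 v3 v4 - tensor_apply N S_tensor v1 v2 v3 v4)"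
      unfolding R_def by (intro ext) (rule ta_diff)
    then show ?thesis unfolding hf hg by (simp add: Phi_diff algebra_simps)
  qed
  define K where "K = tensor_opnorm N R"
  define U where "U = rnorm N u"
  define X where "X = cnorm n (ofplus n xp)"
  define Zn where "Zn = cnorm n xn"
  have U0: "U > 0"
  proof -
    obtain k where k: "k < 2*n" "u k \<noteq> 0" using unz by blast
    have "U \<noteq> 0" using rnorm_zero[of N u k] k by (auto simp: U_def N_def)
    then show ?thesis using rnorm_nonneg[of N u] by (simp add: U_def)
  qed
  have Zn0: "Zn > 0"
  proof -
    obtain j where j: "j < n" "xn j \<noteq> 0" using xnz by blast
    have "Zn \<noteq> 0"
    proof
      assume "Zn = 0"
      then have r0: "rnorm N z = 0" by (simp add: Zn_def N_def z_def rnorm_cnorm_xn)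
      have "z j = 0" "z (n+j) = 0" using rnorm_zero[OF r0] j by (auto simp: N_def)
      then have "Re (xn j) = 0" "Im (xn j) = 0" using j by (auto simp: z_def plusv_def)
      then show False using j by (simp add: complex_eq_iff)
    qed
    moreover have "Zn \<ge> 0" by (simp add: Zn_def cnorm_def sum_nonneg)
    ultimately show ?thesis by simp
  qed
  have X0: "X \<ge> 0" by (simp add: X_def cnorm_def sum_nonneg)
  have tb: "\<And>v1 v2 v3 v4. \<bar>tensor_apply N R v1 v2 v3 v4\<bar> \<le> K * (rnorm N v1 * rnorm N v2 * rnorm N v3 * rnorm N v4)"
    unfolding K_def by (rule ta_bound)
  have K0: "K \<ge> 0"
  proof -
    have "0 \<le> K * (U * U * U * U)" using tb[of u u u u] unfolding U_def by linarith
    moreover have "U * U * U * U > 0" using U0 by simp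
    ultimately show ?thesis by (simp add: zero_le_mult_iff)
  qed
  have rn: "rnorm N xp = X" "rnorm N x' = X" "rnorm N z = Zn" "rnorm N z' = Zn" "rnorm N u' = U"
    apply (simp only: N_def X_def rnorm_cnorm)
    apply (simp only: N_def x'_def rnorm_rot)
    apply (simp only: X_def rnorm_cnorm)
    apply (simp only: N_def z_def Zn_def rnorm_cnorm_xn)
    apply (simp only: N_def z'_def rnorm_rot)
    apply (simp only: z_def Zn_def rnorm_cnorm_xn)
    apply (simp only: N_def u'_def U_def rnorm_rot)
    done
  have pb: "\<bar>Phi (tensor_apply N R) xp x' u u' z z'\<bar> \<le> 64 * K * U^2 * (X + Zn)^2"
    by (rule Phi_bound[OF tb K0]) (use X0 Zn0 rn in \<open>auto simp: U_def rnorm_nonneg\<close>)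
  have "\<bar>hess_quad N (f_obj n m a xn) xp u - hess_quad N (g_obj n m \<sigma> xn) xp u\<bar>
      = c * \<bar>Phi (tensor_apply N R) xp x' u u' z z'\<bar>" using c0 by (simp add: diff abs_mult)
  also have "\<dots> \<le> c * (64 * K * U^2 * (X + Zn)^2)" using c0 pb by simp
  also have "\<dots> < c * (64 * \<delta>0 * U^2 * (X + Zn)^2)"
  proof -
    have "K < \<delta>0" using op by (simp add: K_def R_def N_def)
    moreover have "U^2 * (X + Zn)^2 > 0" using U0 X0 Zn0 by simp
    ultimately have "K * (U^2 * (X + Zn)^2) < \<delta>0 * (U^2 * (X + Zn)^2)"
      by (rule mult_strict_right_mono)
    then show ?thesis using c0 by (simp add: mult_ac)
  qed
  finally show ?thesis by (simp add: N_def c_def U_def X_def Zn_def mult_ac)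
qed


theorem proposition4:
  shows "\<exists>C2 :: real. C2 > 0 \<and>
    (\<forall>\<delta>0 :: real. \<delta>0 > 0 \<longrightarrow>
      (\<forall>(n::nat) (m::nat) (a :: nat \<Rightarrow> nat \<Rightarrow> complex) (xn :: nat \<Rightarrow> complex) (\<sigma>::real).
         n \<ge> 1 \<longrightarrow> m \<ge> 1 \<longrightarrow> (\<exists>j<n. xn j \<noteq> 0) \<longrightarrow> \<sigma> > 0 \<longrightarrow>
         tensor_opnorm (2*n) (\<lambda>i1 i2 i3 i4. T_tensor n m a \<sigma> i1 i2 i3 i4 - S_tensor i1 i2 i3 i4)
           < \<delta>0 \<longrightarrow>
         (\<forall>(xp :: nat \<Rightarrow> real) (u :: nat \<Rightarrow> real).
            (\<forall>k\<ge>2*n. xp k = 0) \<longrightarrow> (\<forall>k\<ge>2*n. u k = 0) \<longrightarrow> (\<exists>k<2*n. u k \<noteq> 0) \<longrightarrow>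
            \<bar>hess_quad (2*n) (f_obj n m a xn) xp u - hess_quad (2*n) (g_obj n m \<sigma> xn) xp u\<bar>
              < C2 * \<delta>0 * c_const m \<sigma> * (rnorm (2*n) u)\<^sup>2
                * (cnorm n (ofplus n xp) + cnorm n xn)\<^sup>2)))"
    apply (rule exI[of _ 64])
  apply (intro conjI allI impI)
   apply simp
  apply (rule main_bound; assumption)
  done

end
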